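(* Let $G=(V,E)\in\Theta$. If $|V|\ge 3$, then the minimum degree of $G$ is $4$; and if $|V|\ge 4$, then $\Gamma(G)$ contains two non-adjacent vertices.
   Context: Graphs are finite, undirected, possibly with parallel edges. Let $Z_3$ be the graph with two vertices and three parallel edges between them. For a graph $G$ and an edge $e$ with ends $u_1,u_2$, $G(e)$ is obtained from $G-e$ by adding a new vertex $w$, two parallel edges joining $w$ and $u_1$, and two parallel edges joining $w$ and $u_2$. $\Theta$ is the smallest set of graphs containing $Z_3$ and containing $G(e)$ for every $G\in\Theta$ and every $e\in E(G)$. For a vertex $x$, $d(x)$ is its degree and $N(x)=\{u: xu\in E(G)\}$; $\Gamma(G)$ is the set of vertices $x$ with $d(x)=4$ and $|N(x)|=2$. *)

theory Defs
  imports Main "HOL-Library.Multiset"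
begin

text \<open>Loopless multigraphs: a vertex set and a multiset of edges, each edge being a
  2-element set of vertices. Vertices are natural numbers (so fresh vertices exist).\<close>

type_synonym mgraph = "nat set \<times> nat set multiset"

definition verts :: "mgraph \<Rightarrow> nat set" where "verts G = fst G"
definition edges :: "mgraph \<Rightarrow> nat set multiset" where "edges G = snd G"

definition deg :: "mgraph \<Rightarrow> nat \<Rightarrow> nat" where
  "deg G x = size (filter_mset (\<lambda>e. x \<in> e) (edges G))"

definition nbrs :: "mgraph \<Rightarrow> nat \<Rightarrow> nat set" where
  "nbrs G x = {u. {x, u} \<in># edges G}"

definition Z3 :: mgraph where
  "Z3 = ({0, 1}, {# {0,1::nat}, {0,1}, {0,1} #})"

definition subdiv :: "mgraph \<Rightarrow> nat \<Rightarrow> nat \<Rightarrow> nat \<Rightarrow> mgraph" where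
  "subdiv G u1 u2 w = (insert w (verts G),
     edges G - {#{u1, u2}#} + {#{w, u1}, {w, u1}, {w, u2}, {w, u2}#})"

inductive_set Theta :: "mgraph set" where
  Z3: "Z3 \<in> Theta"
| step: "\<lbrakk> G \<in> Theta; {u1, u2} \<in># edges G; u1 \<noteq> u2; w \<notin> verts G \<rbrakk>
          \<Longrightarrow> subdiv G u1 u2 w \<in> Theta"

definition Gamma :: "mgraph \<Rightarrow> nat set" where
  "Gamma G = {x \<in> verts G. deg G x = 4 \<and> card (nbrs G x) = 2}"

end

theory Submission
  imports Defs
begin

definition wf :: "mgraph \<Rightarrow> bool" where
  "wf G \<longleftrightarrow> finite (verts G) \<and> (\<forall>e\<in>#edges G. e \<subseteq> verts G)"

lemma verts_subdiv[simp]: "verts (subdiv G u1 u2 w) = insert w (verts G)"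
  by (simp add: subdiv_def verts_def)
lemma edges_subdiv: "edges (subdiv G u1 u2 w) =
   edges G - {#{u1, u2}#} + {#{w, u1}, {w, u1}, {w, u2}, {w, u2}#}"
  by (simp add: subdiv_def edges_def)

locale sd =
  fixes G u1 u2 w
  assumes wf: "wf G" and e: "{u1,u2} \<in># edges G" and ne: "u1 \<noteq> u2"
    and wn: "w \<notin> verts G"
begin

lemma uv: "u1 \<in> verts G" "u2 \<in> verts G"
  using wf e by (auto simp: wf_def)

lemma wne: "w \<noteq> u1" "w \<noteq> u2" using uv wn by auto

lemma nw: "e \<in># edges G \<Longrightarrow> w \<notin> e" using wf wn by (auto simp: wf_def)

lemma wf': "wf (subdiv G u1 u2 w)"
  using wf uv unfolding wf_def edges_subdiv
  by (auto dest: in_diffD)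

lemma deg_other: "x \<notin> {u1,u2,w} \<Longrightarrow> deg (subdiv G u1 u2 w) x = deg G x"
  unfolding deg_def edges_subdiv filter_union_mset filter_diff_mset by auto

lemma deg_w: "deg (subdiv G u1 u2 w) w = 4"
proof -
  have "filter_mset (\<lambda>e. w \<in> e) (edges G) = {#}"
    using nw by (auto simp: filter_mset_eq_conv)
  then show ?thesis
    unfolding deg_def edges_subdiv filter_union_mset filter_diff_mset using wne by simp
qed

lemma deg_u:
  assumes "u \<in> {u1,u2}" shows "deg (subdiv G u1 u2 w) u = deg G u + 1"
proof -
  have sub: "filter_mset (\<lambda>e. u \<in> e) {#{u1,u2}#} \<subseteq># filter_mset (\<lambda>e. u \<in> e) (edges G)"
    using e assms by auto
  have s1: "size (filter_mset (\<lambda>e. u \<in> e) {#{u1,u2}#}) = 1" using assms by auto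
  have s2: "size (filter_mset (\<lambda>e. u \<in> e) {#{w, u1}, {w, u1}, {w, u2}, {w, u2}#}) = 2"
    using assms ne wne by auto
  have "deg G u \<ge> 1" using e assms unfolding deg_def
    by (metis s1 size_mset_mono sub)
  then show ?thesis
    unfolding deg_def edges_subdiv filter_union_mset filter_diff_mset size_union
      size_Diff_submset[OF sub] s1 s2 by (simp add: deg_def)
qed

lemma nbrs_other: "x \<notin> {u1,u2,w} \<Longrightarrow> nbrs (subdiv G u1 u2 w) x = nbrs G x"
  unfolding nbrs_def edges_subdiv
  by (auto simp: in_diff_count doubleton_eq_iff)

lemma nbrs_w: "nbrs (subdiv G u1 u2 w) w = {u1,u2}"
  unfolding nbrs_def edges_subdiv using nw
  by (auto simp: in_diff_count doubleton_eq_iff count_eq_zero_iff)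

end

lemma Theta_wf: "G \<in> Theta \<Longrightarrow> wf G"
proof (induction rule: Theta.induct)
  case Z3 then show ?case by (auto simp: wf_def Z3_def verts_def edges_def)
next
  case (step G u1 u2 w)
  then interpret sd G u1 u2 w by unfold_locales
  show ?case by (rule wf')
qed

lemma card_subdiv: "wf G \<Longrightarrow> w \<notin> verts G \<Longrightarrow> card (verts (subdiv G u1 u2 w)) = card (verts G) + 1"
  by (simp add: wf_def)

lemma Theta_card: "G \<in> Theta \<Longrightarrow> card (verts G) \<ge> 2 \<and> (card (verts G) = 2 \<longrightarrow> G = Z3)"
proof (induction rule: Theta.induct)
  case Z3 then show ?case by (auto simp: Z3_def verts_def)
next
  case (step G u1 u2 w)
  then show ?case using card_subdiv[OF Theta_wf[OF step(1)] step.hyps(4)] by simp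
qed


context sd begin
lemma Gamma_other: "x \<notin> {u1,u2,w} \<Longrightarrow> x \<in> Gamma (subdiv G u1 u2 w) \<longleftrightarrow> x \<in> Gamma G"
  using deg_other nbrs_other by (simp add: Gamma_def)
lemma Gamma_w: "w \<in> Gamma (subdiv G u1 u2 w)"
  using deg_w nbrs_w ne by (simp add: Gamma_def)
end

lemma deg_Z3: "x \<in> verts Z3 \<Longrightarrow> deg Z3 x = 3"
  by (auto simp: Z3_def deg_def edges_def verts_def)

lemma Theta_deg: "G \<in> Theta \<Longrightarrow> card (verts G) \<ge> 3 \<Longrightarrow>
   (\<forall>x\<in>verts G. deg G x \<ge> 4) \<and> (\<exists>x\<in>verts G. deg G x = 4)"
proof (induction rule: Theta.induct)
  case Z3 then show ?case by (simp add: Z3_def verts_def)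
next
  case (step G u1 u2 w)
  interpret sd G u1 u2 w using step Theta_wf by unfold_locales auto
  have c: "card (verts G) \<ge> 2" "card (verts G) = 2 \<longrightarrow> G = Z3" using Theta_card step by auto
  have all: "\<forall>x\<in>verts (subdiv G u1 u2 w). deg (subdiv G u1 u2 w) x \<ge> 4"
  proof
    fix x assume x: "x \<in> verts (subdiv G u1 u2 w)"
    show "deg (subdiv G u1 u2 w) x \<ge> 4"
    proof (cases "card (verts G) = 2")
      case True
      then have GZ: "G = Z3" using c by auto
      then have "verts G = {0,1}" by (simp add: Z3_def verts_def)
      moreover have "u1 \<in> verts G" "u2 \<in> verts G" using uv by auto
      ultimately have "x = w \<or> x = u1 \<or> x = u2" using x ne by auto
      then show ?thesis using deg_w deg_u[of x] deg_Z3 GZ uv by auto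
    next
      case False
      then have IH: "\<forall>x\<in>verts G. deg G x \<ge> 4" using step c by auto
      show ?thesis
      proof (cases "x \<in> {u1,u2,w}")
        case True then show ?thesis using deg_w deg_u[of x] IH uv by auto
      next
        case False then show ?thesis using deg_other IH x by auto
      qed
    qed
  qed
  then show ?case using deg_w by auto
qed


lemma (in sd) nbrs_u:
  assumes "count (edges G) {u1,u2} \<ge> 2" "u \<in> {u1,u2}"
  shows "nbrs (subdiv G u1 u2 w) u = insert w (nbrs G u)"
proof -
  have A: "{u,v} \<in># edges G - {#{u1,u2}#} \<longleftrightarrow> {u,v} \<in># edges G" for v
  proof (cases "{u,v} = {u1,u2}")
    case True then show ?thesis using assms(1) e by (simp add: in_diff_count)
  next
    case False then show ?thesis by (simp add: in_diff_count)
  qed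
  have B: "{u,v} \<in># {#{w, u1}, {w, u1}, {w, u2}, {w, u2}#} \<longleftrightarrow> v = w" for v
    using assms(2) wne ne by (auto simp: doubleton_eq_iff)
  show ?thesis unfolding nbrs_def edges_subdiv using A B by auto
qed

lemma nbrs_Z3: "nbrs Z3 0 = {1}" "nbrs Z3 1 = {0}"
  by (auto simp: nbrs_def Z3_def edges_def doubleton_eq_iff)

lemma count_Z3: "{u1,u2} = {0::nat,1} \<Longrightarrow> count (edges Z3) {u1,u2} = 3"
  by (simp add: Z3_def edges_def)


lemma nbrs_sym: "y \<in> nbrs G x \<longleftrightarrow> x \<in> nbrs G y"
  by (simp add: nbrs_def insert_commute)

lemma Gamma_verts: "Gamma G \<subseteq> verts G" by (auto simp: Gamma_def)

lemma Theta_Gamma3: "G \<in> Theta \<Longrightarrow> card (verts G) = 3 \<Longrightarrow> Gamma G = verts G"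
proof (induction rule: Theta.induct)
  case Z3 then show ?case by (simp add: Z3_def verts_def)
next
  case (step G u1 u2 w)
  interpret sd G u1 u2 w using step Theta_wf by unfold_locales auto
  have "card (verts G) = 2" using step card_subdiv[OF Theta_wf[OF step.hyps(1)] step.hyps(4)] by simp
  then have GZ: "G = Z3" using Theta_card[OF step.hyps(1)] by auto
  then have VG: "verts G = {0,1}" by (simp add: Z3_def verts_def)
  then have U: "{u1,u2} = {0,1}" using uv ne by auto
  have "x \<in> Gamma (subdiv G u1 u2 w)" if x: "x \<in> verts (subdiv G u1 u2 w)" for x
  proof -
    have "x = w \<or> x \<in> {u1,u2}" using x VG U by auto
    then show ?thesis
    proof
      assume "x = w" then show ?thesis using Gamma_w by simp
    next
      assume xu: "x \<in> {u1,u2}"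
      have d: "deg (subdiv G u1 u2 w) x = 4" using deg_u[OF xu] deg_Z3[of x] GZ VG U xu by auto
      have n: "nbrs (subdiv G u1 u2 w) x = insert w (nbrs G x)"
        using nbrs_u[OF _ xu] count_Z3[OF U] GZ by simp
      have "card (nbrs (subdiv G u1 u2 w) x) = 2"
        using n nbrs_Z3 GZ xu U VG wn by (auto simp: doubleton_eq_iff)
      then show ?thesis using d x by (simp add: Gamma_def)
    qed
  qed
  then show ?case using Gamma_verts by blast
qed

lemma Theta_Gamma4: "G \<in> Theta \<Longrightarrow> card (verts G) \<ge> 4 \<Longrightarrow>
   (\<exists>x\<in>Gamma G. \<exists>y\<in>Gamma G. x \<noteq> y \<and> y \<notin> nbrs G x)"
proof (induction rule: Theta.induct)
  case Z3 then show ?case by (simp add: Z3_def verts_def)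
next
  case (step G u1 u2 w)
  interpret sd G u1 u2 w using step Theta_wf by unfold_locales auto
  let ?H = "subdiv G u1 u2 w"
  have cG: "card (verts G) \<ge> 3" using step card_subdiv[OF Theta_wf[OF step.hyps(1)] step.hyps(4)] by simp
  have fin: "finite (verts G)" using wf by (simp add: wf_def)
  have adj: "u2 \<in> nbrs G u1" "u1 \<in> nbrs G u2" using e by (auto simp: nbrs_def insert_commute)
  have key: "\<exists>x\<in>Gamma ?H. \<exists>y\<in>Gamma ?H. x \<noteq> y \<and> y \<notin> nbrs ?H x"
    if r: "r \<in> Gamma G" "r \<notin> {u1,u2}" for r
  proof -
    have "r \<noteq> w" using r(1) Gamma_verts[of G] wn by auto
    then have "r \<in> Gamma ?H" using Gamma_other r by auto
    moreover have "r \<notin> nbrs ?H w" using nbrs_w r by auto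
    ultimately show ?thesis using Gamma_w \<open>r \<noteq> w\<close> by metis
  qed
  show ?case
  proof (cases "card (verts G) = 3")
    case True
    then have GV: "Gamma G = verts G" using Theta_Gamma3 step.hyps(1) by auto
    have "\<not> verts G \<subseteq> {u1,u2}"
    proof
      assume "verts G \<subseteq> {u1,u2}"
      then have "card (verts G) \<le> card {u1,u2}" by (simp add: card_mono)
      also have "\<dots> \<le> 2" by (simp add: card_insert_le_m1)
      finally show False using True by simp
    qed
    then obtain r where "r \<in> verts G" "r \<notin> {u1,u2}" by blast
    then show ?thesis using key GV by auto
  next
    case False
    then obtain x y where xy: "x \<in> Gamma G" "y \<in> Gamma G" "x \<noteq> y" "y \<notin> nbrs G x"
      using step cG by auto
    have xw: "x \<noteq> w" "y \<noteq> w" using xy(1,2) Gamma_verts[of G] wn by auto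
    show ?thesis
    proof (cases "x \<in> {u1,u2}")
      case True
      then have "y \<notin> {u1,u2}" using xy adj by auto
      then show ?thesis using key xy by auto
    next
      case xn: False
      show ?thesis
      proof (cases "y \<in> {u1,u2}")
        case True
        then show ?thesis using key xy xn by auto
      next
        case False
        have "x \<notin> {u1,u2,w}" "y \<notin> {u1,u2,w}" using xn False xw by auto
        then show ?thesis using xy Gamma_other nbrs_other by metis
      qed
    qed
  qed
qed

theorem lemma4p5:
  assumes "G \<in> Theta"
  shows "(card (verts G) \<ge> 3 \<longrightarrow> Min (deg G ` verts G) = 4)
       \<and> (card (verts G) \<ge> 4 \<longrightarrow>
            (\<exists>x\<in>Gamma G. \<exists>y\<in>Gamma G. x \<noteq> y \<and> y \<notin> nbrs G x))"
proof
  show "card (verts G) \<ge> 3 \<longrightarrow> Min (deg G ` verts G) = 4"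
  proof
    assume c: "card (verts G) \<ge> 3"
    have fin: "finite (verts G)" using Theta_wf[OF assms] by (simp add: wf_def)
    from Theta_deg[OF assms c] show "Min (deg G ` verts G) = 4"
      by (intro Min_eqI) (use fin in auto)
  qed
  show "card (verts G) \<ge> 4 \<longrightarrow>
            (\<exists>x\<in>Gamma G. \<exists>y\<in>Gamma G. x \<noteq> y \<and> y \<notin> nbrs G x)"
    using Theta_Gamma4[OF assms] by blast
qed

end
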